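(* Let $0<a\le1$ and let $b$ satisfy $\max\{2a,1\}\le b\le a+1$. Then there exists a compact set $X\subset[0,1]$ with $\overline{\dim}_B(X)=a$ and $\overline{\dim}_{GB}(X)=b$.
   Context: For $\delta>0$ and $F\subset\mathbb{R}^d$, $N_\delta(F)$ is the number of cubes of the standard $\delta$-grid in $\mathbb{R}^d$ that intersect $F$, and $\overline{\dim}_B(F)=\limsup_{\delta\to0}\frac{\log N_\delta(F)}{-\log\delta}$. $C_u(X)$ is the set of uniformly continuous real functions on $X$, $\mathrm{graph}(f)=\{(x,f(x)):x\in X\}$, and $\overline{\dim}_{GB}(X)=\sup_{f\in C_u(X)}\overline{\dim}_B(\mathrm{graph}(f))$. *)

theory Defs
  imports "HOL-Analysis.Analysis"
begin

definition grid_cube :: "real \<Rightarrow> 'a::euclidean_space \<Rightarrow> 'a set" where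
  "grid_cube \<delta> k = {x. \<forall>i\<in>Basis. \<delta> * (k \<bullet> i) \<le> x \<bullet> i \<and> x \<bullet> i \<le> \<delta> * (k \<bullet> i + 1)}"

definition int_lattice :: "'a::euclidean_space set" where
  "int_lattice = {k. \<forall>i\<in>Basis. k \<bullet> i \<in> \<int>}"

definition grid_count :: "real \<Rightarrow> 'a::euclidean_space set \<Rightarrow> nat" where
  "grid_count \<delta> F = card {k \<in> int_lattice. grid_cube \<delta> k \<inter> F \<noteq> {}}"

definition upper_box_dim :: "'a::euclidean_space set \<Rightarrow> ereal" where
  "upper_box_dim F =
     Limsup (at_right 0) (\<lambda>\<delta>. ereal (ln (real (grid_count \<delta> F)) / - ln \<delta>))"

definition graph_of :: "real set \<Rightarrow> (real \<Rightarrow> real) \<Rightarrow> (real \<times> real) set" where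
  "graph_of X f = {(x, f x) | x. x \<in> X}"

definition upper_graph_box_dim :: "real set \<Rightarrow> ereal" where
  "upper_graph_box_dim X =
     (SUP f \<in> {f. uniformly_continuous_on X f}. upper_box_dim (graph_of X f))"

end

theory Submission
  imports Defs "HOL-Real_Asymp.Real_Asymp"
begin


lemma card_int_interval_le:
  fixes A B :: real assumes "A \<le> B + 1"
  shows "real (card {k::int. A \<le> real_of_int k \<and> real_of_int k \<le> B}) \<le> B - A + 1"
proof -
  have e: "{k::int. A \<le> real_of_int k \<and> real_of_int k \<le> B} = {\<lceil>A\<rceil>..\<lfloor>B\<rfloor>}"
    by (auto simp: ceiling_le_iff le_floor_iff)
  show ?thesis
  proof (cases "\<lceil>A\<rceil> \<le> \<lfloor>B\<rfloor>")
    case True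
    then have "real (card {\<lceil>A\<rceil>..\<lfloor>B\<rfloor>}) = real_of_int (\<lfloor>B\<rfloor> - \<lceil>A\<rceil> + 1)" by simp
    also have "\<dots> \<le> B - A + 1" using floor_le_ceiling[of B] le_of_int_ceiling[of A] of_int_floor_le[of B] by linarith
    finally show ?thesis using e by simp
  next
    case False then show ?thesis using assms by (simp add: e)
  qed
qed

lemma finite_int_interval: "finite {k::int. A \<le> real_of_int k \<and> real_of_int k \<le> B}"
proof -
  have "{k::int. A \<le> real_of_int k \<and> real_of_int k \<le> B} = {\<lceil>A\<rceil>..\<lfloor>B\<rfloor>}"
    by (auto simp: ceiling_le_iff le_floor_iff)
  then show ?thesis by simp
qed

lemma grid_real_simp:
  "grid_cube \<delta> (k::real) = {x. \<delta> * k \<le> x \<and> x \<le> \<delta> * (k + 1)}"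
  "(k::real) \<in> int_lattice \<longleftrightarrow> k \<in> \<int>"
  by (auto simp: grid_cube_def int_lattice_def)

lemma grid_pair_simp:
  "grid_cube \<delta> (k::real\<times>real) = {x. \<delta> * fst k \<le> fst x \<and> fst x \<le> \<delta> * (fst k + 1) \<and> \<delta> * snd k \<le> snd x \<and> snd x \<le> \<delta> * (snd k + 1)}"
  "(k::real\<times>real) \<in> int_lattice \<longleftrightarrow> fst k \<in> \<int> \<and> snd k \<in> \<int>"
  by (auto simp: grid_cube_def int_lattice_def Basis_prod_def inner_Pair_0)

definition gset :: "real \<Rightarrow> 'a::euclidean_space set \<Rightarrow> 'a set" where
  "gset \<delta> F = {k \<in> int_lattice. grid_cube \<delta> k \<inter> F \<noteq> {}}"

lemma grid_count_gset: "grid_count \<delta> F = card (gset \<delta> F)"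
  by (simp add: grid_count_def gset_def)

lemma gset_mono: "F \<subseteq> G \<Longrightarrow> gset \<delta> F \<subseteq> gset \<delta> G"
  by (auto simp: gset_def)

lemma gset_UN: "gset \<delta> (\<Union>i\<in>I. F i) = (\<Union>i\<in>I. gset \<delta> (F i))"
  by (auto simp: gset_def)

lemma gset_Un: "gset \<delta> (F \<union> G) = gset \<delta> F \<union> gset \<delta> G"
  by (auto simp: gset_def)

lemma count_mono: "finite (gset \<delta> G) \<Longrightarrow> F \<subseteq> G \<Longrightarrow> grid_count \<delta> F \<le> grid_count \<delta> G"
  by (simp add: grid_count_gset card_mono gset_mono)

lemma count_UN: "finite I \<Longrightarrow> grid_count \<delta> (\<Union>i\<in>I. F i) \<le> (\<Sum>i\<in>I. grid_count \<delta> (F i))"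
  by (simp add: grid_count_gset gset_UN card_UN_le)

lemma count_Un: "grid_count \<delta> (F \<union> G) \<le> grid_count \<delta> F + grid_count \<delta> G"
  by (simp add: grid_count_gset gset_Un card_Un_le)

lemma gset1_sub:
  assumes "\<delta> > 0" "F \<subseteq> {lo..hi}"
  shows "gset \<delta> (F::real set) \<subseteq> real_of_int ` {k::int. lo/\<delta> - 1 \<le> real_of_int k \<and> real_of_int k \<le> hi/\<delta>}"
proof
  fix k assume "k \<in> gset \<delta> F"
  then obtain x where k: "k \<in> \<int>" "\<delta> * k \<le> x" "x \<le> \<delta> * (k+1)" "x \<in> F"
    by (auto simp: gset_def grid_real_simp)
  then obtain n where n: "k = real_of_int n" by (auto elim: Ints_cases)
  have "x \<le> hi" "lo \<le> x" using k assms by auto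
  then have "real_of_int n \<le> hi/\<delta>" "lo/\<delta> - 1 \<le> real_of_int n" using k n assms
    by (auto simp: field_simps)
  then show "k \<in> real_of_int ` {k::int. lo/\<delta> - 1 \<le> real_of_int k \<and> real_of_int k \<le> hi/\<delta>}"
    using n by auto
qed

lemma count1_interval:
  assumes "\<delta> > 0" "F \<subseteq> {lo..hi}" "lo \<le> hi"
  shows "finite (gset \<delta> (F::real set))" "real (grid_count \<delta> F) \<le> (hi - lo)/\<delta> + 2"
proof -
  let ?S = "{k::int. lo/\<delta> - 1 \<le> real_of_int k \<and> real_of_int k \<le> hi/\<delta>}"
  have sub: "gset \<delta> F \<subseteq> real_of_int ` ?S" by (rule gset1_sub[OF assms(1,2)])
  show "finite (gset \<delta> F)" using finite_subset[OF sub] finite_int_interval by blast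
  have "card (gset \<delta> F) \<le> card (real_of_int ` ?S)" by (rule card_mono[OF _ sub]) (simp add: finite_int_interval)
  also have "\<dots> \<le> card ?S" by (rule card_image_le) (simp add: finite_int_interval)
  finally have "real (card (gset \<delta> F)) \<le> real (card ?S)" by simp
  also have "\<dots> \<le> hi/\<delta> - (lo/\<delta> - 1) + 1"
    by (rule card_int_interval_le) (use divide_right_mono[OF assms(3), of \<delta>] assms(1) in auto)
  finally show "real (grid_count \<delta> F) \<le> (hi - lo)/\<delta> + 2" by (simp add: grid_count_gset diff_divide_distrib)
qed

lemma gset2_sub:
  assumes "\<delta> > 0" "F \<subseteq> {lo1..hi1} \<times> {lo2..hi2}"
  shows "gset \<delta> (F::(real\<times>real) set) \<subseteq> (\<lambda>(p,q). (real_of_int p, real_of_int q)) `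
     ({k::int. lo1/\<delta> - 1 \<le> real_of_int k \<and> real_of_int k \<le> hi1/\<delta>} \<times> {k::int. lo2/\<delta> - 1 \<le> real_of_int k \<and> real_of_int k \<le> hi2/\<delta>})"
proof
  fix k assume "k \<in> gset \<delta> F"
  then obtain x where k: "fst k \<in> \<int>" "snd k \<in> \<int>" "\<delta> * fst k \<le> fst x" "fst x \<le> \<delta> * (fst k+1)"
     "\<delta> * snd k \<le> snd x" "snd x \<le> \<delta> * (snd k+1)" "x \<in> F"
    by (auto simp: gset_def grid_pair_simp)
  then obtain n where n: "fst k = real_of_int n" by (auto elim: Ints_cases)
  from k obtain m where m: "snd k = real_of_int m" by (auto elim: Ints_cases)
  have "fst x \<le> hi1" "lo1 \<le> fst x" "snd x \<le> hi2" "lo2 \<le> snd x" using k assms by auto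
  then have "real_of_int n \<le> hi1/\<delta>" "lo1/\<delta> - 1 \<le> real_of_int n"
     "real_of_int m \<le> hi2/\<delta>" "lo2/\<delta> - 1 \<le> real_of_int m" using k n m assms
    by (auto simp: field_simps)
  then show "k \<in> (\<lambda>(p,q). (real_of_int p, real_of_int q)) `
     ({k::int. lo1/\<delta> - 1 \<le> real_of_int k \<and> real_of_int k \<le> hi1/\<delta>} \<times> {k::int. lo2/\<delta> - 1 \<le> real_of_int k \<and> real_of_int k \<le> hi2/\<delta>})"
    using n m by (auto intro!: image_eqI[where x="(n,m)"] prod_eqI)
qed

lemma count2_box:
  assumes "\<delta> > 0" "F \<subseteq> {lo1..hi1} \<times> {lo2..hi2}" "lo1 \<le> hi1" "lo2 \<le> hi2"
  shows "finite (gset \<delta> (F::(real\<times>real) set))"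
        "real (grid_count \<delta> F) \<le> ((hi1 - lo1)/\<delta> + 2) * ((hi2 - lo2)/\<delta> + 2)"
proof -
  let ?S1 = "{k::int. lo1/\<delta> - 1 \<le> real_of_int k \<and> real_of_int k \<le> hi1/\<delta>}"
  let ?S2 = "{k::int. lo2/\<delta> - 1 \<le> real_of_int k \<and> real_of_int k \<le> hi2/\<delta>}"
  have sub: "gset \<delta> F \<subseteq> (\<lambda>(p,q). (real_of_int p, real_of_int q)) ` (?S1 \<times> ?S2)" by (rule gset2_sub[OF assms(1,2)])
  have fin: "finite (?S1 \<times> ?S2)" by (simp add: finite_int_interval)
  show "finite (gset \<delta> F)" using finite_subset[OF sub] fin by blast
  have "card (gset \<delta> F) \<le> card ((\<lambda>(p,q). (real_of_int p, real_of_int q)) ` (?S1 \<times> ?S2))" by (rule card_mono[OF _ sub]) (use fin in simp)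
  also have "\<dots> \<le> card (?S1 \<times> ?S2)" by (rule card_image_le[OF fin])
  also have "\<dots> = card ?S1 * card ?S2" by (rule card_cartesian_product)
  finally have "real (card (gset \<delta> F)) \<le> real (card ?S1) * real (card ?S2)" by (simp flip: of_nat_mult)
  also have "\<dots> \<le> (hi1/\<delta> - (lo1/\<delta> - 1) + 1) * (hi2/\<delta> - (lo2/\<delta> - 1) + 1)"
    by (intro mult_mono card_int_interval_le) (use divide_right_mono[OF assms(3), of \<delta>] divide_right_mono[OF assms(4), of \<delta>] assms(1) in auto)
  finally show "real (grid_count \<delta> F) \<le> ((hi1 - lo1)/\<delta> + 2) * ((hi2 - lo2)/\<delta> + 2)"
    by (simp add: grid_count_gset diff_divide_distrib add.commute)
qed



lemma count1_point: "\<delta> > 0 \<Longrightarrow> grid_count \<delta> {x::real} \<le> 2"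
  using count1_interval(2)[of \<delta> "{x}" x x] by simp

lemma count1_finite: assumes "\<delta> > 0" "finite B" shows "grid_count \<delta> (B::real set) \<le> 2 * card B"
proof -
  have "grid_count \<delta> (\<Union>x\<in>B. {x}) \<le> (\<Sum>x\<in>B. grid_count \<delta> {x})" by (rule count_UN[OF assms(2)])
  also have "\<dots> \<le> (\<Sum>x\<in>B. 2)" by (intro sum_mono count1_point assms(1))
  finally show ?thesis by simp
qed

lemma count2_point: "\<delta> > 0 \<Longrightarrow> grid_count \<delta> {x::real\<times>real} \<le> 4"
  using count2_box(2)[of \<delta> "{x}" "fst x" "fst x" "snd x" "snd x"] by (cases x) simp

lemma count2_graph_finite: assumes "\<delta> > 0" "finite B" shows "grid_count \<delta> (graph_of B f) \<le> 4 * card B"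
proof -
  have e: "graph_of B f = (\<Union>x\<in>B. {(x, f x)})" by (auto simp: graph_of_def)
  have "grid_count \<delta> (\<Union>x\<in>B. {(x, f x)}) \<le> (\<Sum>x\<in>B. grid_count \<delta> {(x, f x)})" by (rule count_UN[OF assms(2)])
  also have "\<dots> \<le> (\<Sum>x\<in>B. 4)" by (intro sum_mono count2_point assms(1))
  finally show ?thesis by (simp add: e)
qed

lemma floor_cube: fixes x \<delta> :: real assumes "\<delta> > 0" shows "\<delta> * real_of_int \<lfloor>x/\<delta>\<rfloor> \<le> x" "x \<le> \<delta> * (real_of_int \<lfloor>x/\<delta>\<rfloor> + 1)"
proof -
  have h1: "real_of_int \<lfloor>x/\<delta>\<rfloor> \<le> x/\<delta>" by (rule of_int_floor_le)
  have h2: "x/\<delta> \<le> real_of_int \<lfloor>x/\<delta>\<rfloor> + 1" by (rule real_of_int_floor_add_one_ge)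
  have "\<delta> * real_of_int \<lfloor>x/\<delta>\<rfloor> \<le> \<delta> * (x/\<delta>)" by (rule mult_left_mono[OF h1]) (use assms in simp)
  then show "\<delta> * real_of_int \<lfloor>x/\<delta>\<rfloor> \<le> x" using assms by simp
  have "\<delta> * (x/\<delta>) \<le> \<delta> * (real_of_int \<lfloor>x/\<delta>\<rfloor> + 1)" by (rule mult_left_mono[OF h2]) (use assms in simp)
  then show "x \<le> \<delta> * (real_of_int \<lfloor>x/\<delta>\<rfloor> + 1)" using assms by simp
qed

lemma abs_div_lt: fixes x y \<delta> :: real assumes "\<delta> > 0" "\<bar>x/\<delta> - y/\<delta>\<bar> < 1" shows "\<bar>x - y\<bar> < \<delta>"
proof -
  have "x - y = \<delta> * (x/\<delta> - y/\<delta>)" using assms(1) by (simp add: field_simps)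
  then have e: "\<bar>x - y\<bar> = \<delta> * \<bar>x/\<delta> - y/\<delta>\<bar>" using assms(1) by (simp add: abs_mult)
  have "\<delta> * \<bar>x/\<delta> - y/\<delta>\<bar> < \<delta> * 1" by (rule mult_strict_left_mono[OF assms(2) assms(1)])
  then show ?thesis using e by simp
qed

lemma count1_sep:
  assumes "\<delta> > 0" "finite P" "P \<subseteq> F" "finite (gset \<delta> (F::real set))"
    and sep: "\<And>p q. p \<in> P \<Longrightarrow> q \<in> P \<Longrightarrow> p \<noteq> q \<Longrightarrow> \<delta> < \<bar>p - q\<bar>"
  shows "card P \<le> grid_count \<delta> F"
proof -
  let ?g = "\<lambda>p. real_of_int \<lfloor>p/\<delta>\<rfloor>"
  have sub: "?g ` P \<subseteq> gset \<delta> F"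
  proof
    fix y assume "y \<in> ?g ` P"
    then obtain p where p: "p \<in> P" "y = ?g p" by auto
    have "\<delta> * y \<le> p" "p \<le> \<delta> * (y + 1)"
      using p floor_cube[OF assms(1)] by auto
    then show "y \<in> gset \<delta> F" using p assms(3) by (auto simp: gset_def grid_real_simp)
  qed
  moreover have inj: "inj_on ?g P"
  proof
    fix p q assume pq: "p \<in> P" "q \<in> P" "?g p = ?g q"
    then have "\<lfloor>p/\<delta>\<rfloor> = \<lfloor>q/\<delta>\<rfloor>" by simp
    then have "\<bar>p/\<delta> - q/\<delta>\<bar> < 1" by linarith
    then have l: "\<bar>p - q\<bar> < \<delta>" using abs_div_lt[OF assms(1)] by blast
    show "p = q"
    proof (rule ccontr)
      assume "p \<noteq> q"
      from sep[OF pq(1,2) this] l show False by linarith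
    qed
  qed
  have c1: "card (?g ` P) \<le> card (gset \<delta> F)" by (rule card_mono[OF assms(4) sub])
  have c2: "card (?g ` P) = card P" by (rule card_image[OF inj])
  show ?thesis unfolding grid_count_gset using c1 c2 by linarith
qed

lemma count2_sep:
  assumes "\<delta> > 0" "finite P" "P \<subseteq> F" "finite (gset \<delta> (F::(real\<times>real) set))"
    and sep: "\<And>p q. p \<in> P \<Longrightarrow> q \<in> P \<Longrightarrow> p \<noteq> q \<Longrightarrow> \<delta> < \<bar>fst p - fst q\<bar> \<or> \<delta> < \<bar>snd p - snd q\<bar>"
  shows "card P \<le> grid_count \<delta> F"
proof -
  let ?g = "\<lambda>p. (real_of_int \<lfloor>fst p/\<delta>\<rfloor>, real_of_int \<lfloor>snd p/\<delta>\<rfloor>)"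
  have sub: "?g ` P \<subseteq> gset \<delta> F"
  proof
    fix y assume "y \<in> ?g ` P"
    then obtain p where p: "p \<in> P" "y = ?g p" by auto
    have "\<delta> * fst y \<le> fst p" "fst p \<le> \<delta> * (fst y + 1)"
      using p floor_cube[OF assms(1)] by auto
    moreover have "\<delta> * snd y \<le> snd p" "snd p \<le> \<delta> * (snd y + 1)"
      using p floor_cube[OF assms(1)] by auto
    ultimately show "y \<in> gset \<delta> F" using p assms(3) by (auto simp: gset_def grid_pair_simp)
  qed
  moreover have inj: "inj_on ?g P"
  proof
    fix p q assume pq: "p \<in> P" "q \<in> P" "?g p = ?g q"
    then have "\<lfloor>fst p/\<delta>\<rfloor> = \<lfloor>fst q/\<delta>\<rfloor>" "\<lfloor>snd p/\<delta>\<rfloor> = \<lfloor>snd q/\<delta>\<rfloor>" by simp_all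
    then have "\<bar>fst p/\<delta> - fst q/\<delta>\<bar> < 1" "\<bar>snd p/\<delta> - snd q/\<delta>\<bar> < 1" by linarith+
    then have l: "\<bar>fst p - fst q\<bar> < \<delta>" "\<bar>snd p - snd q\<bar> < \<delta>" using abs_div_lt[OF assms(1)] by blast+
    show "p = q"
    proof (rule ccontr)
      assume "p \<noteq> q"
      from sep[OF pq(1,2) this] l show False by linarith
    qed
  qed
  have c1: "card (?g ` P) \<le> card (gset \<delta> F)" by (rule card_mono[OF assms(4) sub])
  have c2: "card (?g ` P) = card P" by (rule card_image[OF inj])
  show ?thesis unfolding grid_count_gset using c1 c2 by linarith
qed



lemma ubd_lower:
  fixes F :: "'a::euclidean_space set" and p q :: "nat \<Rightarrow> real"
  assumes q: "filterlim q at_top sequentially" and pq: "(\<lambda>k. p k / q k) \<longlonglongrightarrow> c"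
   and N: "\<And>k. k \<ge> K \<Longrightarrow> 2 powr p k \<le> real (grid_count (2 powr (- q k)) F)"
  shows "ereal c \<le> upper_box_dim F"
proof -
  define R where "R = (\<lambda>\<delta>::real. ereal (ln (real (grid_count \<delta> F)) / - ln \<delta>))"
  define s where "s = (\<lambda>k. (2::real) powr (- q k))"
  have s0: "filterlim s (at_right 0) sequentially"
  proof -
    have "((\<lambda>x::real. 2 powr (-x)) \<longlongrightarrow> 0) at_top" by real_asymp
    then have "(s \<longlongrightarrow> 0) sequentially" unfolding s_def using q by (rule filterlim_compose)
    moreover have "eventually (\<lambda>k. s k > 0) sequentially" by (simp add: s_def)
    ultimately show ?thesis by (rule tendsto_imp_filterlim_at_right)
  qed
  have ev: "eventually (\<lambda>k. ereal (p k / q k) \<le> R (s k)) sequentially"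
  proof -
    have "eventually (\<lambda>k. q k > 0 \<and> k \<ge> K) sequentially"
      using filterlim_at_top_dense[THEN iffD1, OF q] eventually_ge_at_top[of K] by (auto intro: eventually_conj)
    then show ?thesis
    proof (rule eventually_mono)
      fix k assume k: "q k > 0 \<and> k \<ge> K"
      have "0 < 2 powr p k" by simp
      then have "ln (2 powr p k) \<le> ln (real (grid_count (s k) F))"
        using N[of k] k by (intro ln_mono) (simp_all add: s_def)
      then have "p k * ln 2 \<le> ln (real (grid_count (s k) F))" by (simp add: ln_powr)
      moreover have "- ln (s k) = q k * ln 2" by (simp add: s_def ln_powr)
      ultimately have A: "p k * ln 2 \<le> ln (real (grid_count (s k) F))" "- ln (s k) = q k * ln 2" .
      have pos: "q k * ln 2 > 0" using k by simp
      have "p k / q k = (p k * ln 2) / (q k * ln 2)" by simp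
      also have "\<dots> \<le> ln (real (grid_count (s k) F)) / (q k * ln 2)"
        by (rule divide_right_mono[OF A(1)]) (use pos in simp)
      finally show "ereal (p k / q k) \<le> R (s k)" unfolding R_def A(2) by simp
    qed
  qed
  have "ereal c = Limsup sequentially (\<lambda>k. ereal (p k / q k))"
    by (rule lim_imp_Limsup[symmetric]) (use pq in auto)
  also have "\<dots> \<le> Limsup sequentially (\<lambda>k. R (s k))" by (rule Limsup_mono[OF ev])
  also have "\<dots> \<le> Limsup (at_right 0) R"
  proof (rule Limsup_greatest)
    fix P assume "eventually P (at_right (0::real))"
    then have "eventually (\<lambda>k. P (s k)) sequentially" using s0 by (simp add: filterlim_iff)
    then have "eventually (\<lambda>k. R (s k) \<le> (SUP x\<in>Collect P. R x)) sequentially"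
      by (rule eventually_mono) (auto intro: SUP_upper)
    then show "Limsup sequentially (\<lambda>k. R (s k)) \<le> (SUP x\<in>Collect P. R x)" by (rule Limsup_bounded)
  qed
  finally show ?thesis by (simp add: upper_box_dim_def R_def)
qed



lemma ubd_upper:
  fixes F :: "'a::euclidean_space set"
  assumes c: "c \<ge> 0" and C: "C > 0" and r: "r > 0"
    and bnd: "\<And>\<delta>. 0 < \<delta> \<Longrightarrow> \<delta> < r \<Longrightarrow> real (grid_count \<delta> F) \<le> C * ln (1/\<delta>) * \<delta> powr (-c)"
  shows "upper_box_dim F \<le> ereal c"
proof (rule ereal_le_epsilon2)
  fix e :: real assume e: "e > 0"
  have g: "((\<lambda>\<delta>::real. (ln C + ln (ln (1/\<delta>))) / (- ln \<delta>)) \<longlongrightarrow> 0) (at_right 0)" by real_asymp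
  have ev1: "eventually (\<lambda>\<delta>. (ln C + ln (ln (1/\<delta>))) / (- ln \<delta>) < e) (at_right (0::real))"
    using order_tendstoD(2)[OF g e] .
  have ev2: "eventually (\<lambda>\<delta>. 0 < \<delta> \<and> \<delta> < min r (1/3)) (at_right (0::real))"
    unfolding eventually_at_right_field using r by (intro exI[of _ "min r (1/3)"]) auto
  have "eventually (\<lambda>\<delta>. ereal (ln (real (grid_count \<delta> F)) / - ln \<delta>) \<le> ereal (c + e)) (at_right (0::real))"
    using ev1 ev2
  proof eventually_elim
    case (elim \<delta>)
    then have d: "0 < \<delta>" "\<delta> < r" "\<delta> < 1/3" by auto
    have l1: "ln (1/\<delta>) > 1"
    proof -
      have "exp (1::real) \<le> 3" by (rule exp_le)
      also have "3 < 1/\<delta>" using d by (simp add: field_simps)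
      finally have "exp 1 < 1/\<delta>" .
      then show ?thesis using ln_less_cancel_iff[of "exp 1" "1/\<delta>"] d by simp
    qed
    have ld: "- ln \<delta> = ln (1/\<delta>)" using d by (simp add: ln_div)
    have lpos: "- ln \<delta> > 0" using l1 ld by simp
    show ?case
    proof (cases "grid_count \<delta> F = 0")
      case True then show ?thesis using c e by simp
    next
      case False
      then have "0 < real (grid_count \<delta> F)" by simp
      then have "ln (real (grid_count \<delta> F)) \<le> ln (C * ln (1/\<delta>) * \<delta> powr (-c))"
        using bnd[OF d(1,2)] by (rule ln_mono[rotated])
      also have "\<dots> = ln C + ln (ln (1/\<delta>)) + c * (- ln \<delta>)"
        using C l1 d by (simp add: ln_mult ln_powr)
      finally have "ln (real (grid_count \<delta> F)) / - ln \<delta> \<le> (ln C + ln (ln (1/\<delta>)) + c * (- ln \<delta>)) / - ln \<delta>"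
        by (rule divide_right_mono) (use lpos in simp)
      also have "\<dots> = (ln C + ln (ln (1/\<delta>))) / - ln \<delta> + c"
        using lpos by (simp add: field_simps)
      also have "\<dots> \<le> c + e" using elim by simp
      finally show ?thesis by simp
    qed
  qed
  then have "upper_box_dim F \<le> ereal (c + e)" unfolding upper_box_dim_def by (rule Limsup_bounded)
  then show "upper_box_dim F \<le> ereal c + ereal e" by simp
qed



declare powr_le_cancel_iff[simp del] powr_less_cancel_iff[simp del]

lemma lin2: "(A::real) \<le> C \<Longrightarrow> B \<le> C \<Longrightarrow> 2 * (A + B) \<le> 4 * C" by simp

locale cons =
  fixes a b :: real
  assumes a0: "0 < a" and a1: "a \<le> 1" and b2a: "2 * a \<le> b" and b1: "1 \<le> b" and ba: "b \<le> a + 1"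
begin

definition D :: "nat \<Rightarrow> real" where "D k = 2 powr (- ((real k)^2))"
definition H :: "nat \<Rightarrow> real" where "H k = 2 powr (- real k)"
definition mr :: "nat \<Rightarrow> real" where "mr k = 2 powr ((b - 1) * (real k)^2 - real k)"
definition m :: "nat \<Rightarrow> nat" where "m k = nat \<lceil>mr k\<rceil>"
definition L :: "nat \<Rightarrow> nat" where "L k = 2 ^ (k^2 - k)"
definition eta :: "nat \<Rightarrow> real" where "eta k = 2 powr (- (b * (real k)^2 + 2 * real k + 2) / a)"
definition u :: "nat \<Rightarrow> real" where "u k = 2 * (2 powr ((b - 2) * (real k)^2 - real k) + 2 powr (- ((real k)^2)))"

lemma L_real: "real (L k) = 2 powr ((real k)^2 - real k)"
proof -
  have "k \<le> k^2" by (simp add: power2_eq_square)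
  then have "real (k^2 - k) = (real k)^2 - real k" by (simp add: of_nat_diff)
  then show ?thesis unfolding L_def by (metis of_nat_numeral of_nat_power powr_realpow zero_less_numeral)
qed

lemma L_pos: "L k \<ge> 1" by (simp add: L_def)

lemma m_ge: "real (m k) \<ge> mr k" unfolding m_def by linarith
lemma m_le: "real (m k) \<le> mr k + 1"
  unfolding m_def using mr_def by (simp add: of_nat_nat)
lemma m_pos: "m k \<ge> 1"
proof -
  have "mr k > 0" by (simp add: mr_def)
  then show ?thesis unfolding m_def by linarith
qed

lemma pw_mono: "x \<le> y \<Longrightarrow> (2::real) powr x \<le> 2 powr y" by (rule powr_mono) auto

lemma sq_ge: "real k \<le> (real k)^2"
proof -
  have "k \<le> k^2" by (simp add: power2_eq_square)
  then show ?thesis by (metis of_nat_le_iff of_nat_power)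
qed

lemma pw_ge1: "0 \<le> x \<Longrightarrow> 1 \<le> (2::real) powr x" by (rule ge_one_powr_ge_zero) auto

lemma m_le2: "real (m k) \<le> 2 * 2 powr ((b - 1) * (real k)^2)"
proof -
  have "mr k \<le> 2 powr ((b - 1) * (real k)^2)" unfolding mr_def by (rule pw_mono) simp
  moreover have "1 \<le> 2 powr ((b - 1) * (real k)^2)" using b1 by (intro pw_ge1) simp
  ultimately show ?thesis using m_le[of k] by linarith
qed

lemma m_le_a: "real (m k) \<le> 2 * 2 powr (a * (real k)^2)"
proof -
  have "(b - 1) * (real k)^2 \<le> a * (real k)^2" using ba by (intro mult_right_mono) auto
  then have "2 powr ((b - 1) * (real k)^2) \<le> 2 powr (a * (real k)^2)" by (rule pw_mono)
  then show ?thesis using m_le2[of k] by linarith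
qed

lemma Leta: "real (L k) * eta k \<le> D k / 4"
proof -
  let ?s = "real k"
  have "b * ?s^2 \<ge> 2 * a * ?s^2" using b2a by (intro mult_right_mono) auto
  then have "(b * ?s^2 + 2 * ?s + 2) / a \<ge> (2 * a * ?s^2 + 2 * a * ?s + 2 * a) / a"
    using a0 a1 by (intro divide_right_mono) (auto intro!: add_mono mult_right_mono)
  also have "(2 * a * ?s^2 + 2 * a * ?s + 2 * a) / a = 2 * ?s^2 + 2 * ?s + 2" using a0 by (simp add: field_simps)
  finally have ex: "?s^2 - ?s - (b * ?s^2 + 2 * ?s + 2) / a \<le> - (?s^2) - 2" by simp
  have eqe: "(?s^2 - ?s) + (- (b * ?s^2 + 2 * ?s + 2) / a) = ?s^2 - ?s - (b * ?s^2 + 2 * ?s + 2) / a"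
    by (simp add: minus_divide_left)
  have "real (L k) * eta k = 2 powr (?s^2 - ?s - (b * ?s^2 + 2 * ?s + 2) / a)"
    unfolding L_real eta_def powr_add[symmetric] eqe ..
  also have "\<dots> \<le> 2 powr (- (?s^2) - 2)" by (rule pw_mono[OF ex])
  also have "\<dots> = D k / 4" by (simp add: D_def powr_diff)
  finally show ?thesis .
qed


lemma D_pos: "D k > 0" by (simp add: D_def)
lemma eta_pos: "eta k > 0" by (simp add: eta_def)
lemma u_pos: "u k > 0" unfolding u_def by (intro mult_pos_pos add_pos_pos) auto
lemma D_le1: "D k \<le> 1"
proof -
  have "D k \<le> 2 powr 0" unfolding D_def by (rule pw_mono) simp
  then show ?thesis by simp
qed

lemma Dpow: "D k powr t = 2 powr (- ((real k)^2) * t)"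
  unfolding D_def by (simp add: powr_powr)

lemma eta_pow: "eta k powr (- a) = 2 powr (b * (real k)^2 + 2 * real k + 2)"
proof -
  have "eta k powr (- a) = 2 powr ((- (b * (real k)^2 + 2 * real k + 2) / a) * (- a))"
    unfolding eta_def by (rule powr_powr)
  also have "(- (b * (real k)^2 + 2 * real k + 2) / a) * (- a) = b * (real k)^2 + 2 * real k + 2"
    using a0 by (simp add: field_simps)
  finally show ?thesis .
qed

lemma mL_le: "real (m k) * real (L k) \<le> 2 * 2 powr (b * (real k)^2 - real k)"
proof -
  have "real (m k) * real (L k) \<le> (2 * 2 powr ((b - 1) * (real k)^2)) * real (L k)"
    by (rule mult_right_mono[OF m_le2]) simp
  also have "\<dots> = (2 * 2 powr ((b - 1) * (real k)^2)) * 2 powr ((real k)^2 - real k)" by (simp add: L_real)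
  also have "\<dots> = 2 * 2 powr ((b - 1) * (real k)^2 + ((real k)^2 - real k))" by (simp add: powr_add)
  also have "(b - 1) * (real k)^2 + ((real k)^2 - real k) = b * (real k)^2 - real k" by (simp add: algebra_simps)
  finally show ?thesis .
qed

lemma mL_le_eta: "real (m k) * real (L k) \<le> eta k powr (- a)"
proof -
  have "2 * 2 powr (b * (real k)^2 - real k) = 2 powr (b * (real k)^2 - real k + 1)" by (simp add: powr_add)
  also have "\<dots> \<le> 2 powr (b * (real k)^2 + 2 * real k + 2)" by (rule pw_mono) simp
  finally show ?thesis using mL_le[of k] eta_pow[of k] by linarith
qed

lemma mL_le_D: "real (m k) * real (L k) \<le> 2 * D k powr (- b)"
proof -
  have "2 powr (b * (real k)^2 - real k) \<le> 2 powr (- ((real k)^2) * (- b))" by (rule pw_mono) simp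
  then show ?thesis using mL_le[of k] unfolding Dpow by linarith
qed

lemma pw_mult_eq: assumes "x + y = z" shows "(2::real) powr x * 2 powr y = 2 powr z"
  by (subst assms[symmetric]) (rule powr_add[symmetric])

lemma mL_ge: "2 powr (b * (real k)^2 - 2 * real k) \<le> real (m k) * real (L k)"
proof -
  have "mr k * real (L k) = 2 powr (b * (real k)^2 - 2 * real k)"
    unfolding mr_def L_real by (rule pw_mult_eq) (simp add: algebra_simps)
  moreover have "mr k * real (L k) \<le> real (m k) * real (L k)" by (rule mult_right_mono[OF m_ge]) simp
  ultimately show ?thesis by simp
qed

lemma mD_le: "real (m k) * D k \<le> u k / 2"
proof -
  have "real (m k) * D k \<le> (mr k + 1) * D k" by (rule mult_right_mono[OF m_le]) (simp add: D_def)
  moreover have "mr k * D k = 2 powr ((b - 2) * (real k)^2 - real k)"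
    unfolding mr_def D_def by (rule pw_mult_eq) (simp add: algebra_simps)
  ultimately show ?thesis by (simp add: u_def D_def distrib_right)
qed

lemma mD_a: "real (m k) * D k \<le> 2 * D k powr (1 - a)"
proof -
  have "real (m k) * D k \<le> (2 * 2 powr (a * (real k)^2)) * D k" by (rule mult_right_mono[OF m_le_a]) (simp add: D_def)
  moreover have "2 powr (a * (real k)^2) * D k = D k powr (1 - a)"
    unfolding Dpow unfolding D_def by (rule pw_mult_eq) (simp add: algebra_simps)
  ultimately show ?thesis by simp
qed

lemma mD_b: "real (m k) * D k \<le> 2 * D k powr (2 - b)"
proof -
  have "real (m k) * D k \<le> (2 * 2 powr ((b - 1) * (real k)^2)) * D k" by (rule mult_right_mono[OF m_le2]) (simp add: D_def)
  moreover have "2 powr ((b - 1) * (real k)^2) * D k = D k powr (2 - b)"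
    unfolding Dpow unfolding D_def by (rule pw_mult_eq) (simp add: algebra_simps)
  ultimately show ?thesis by simp
qed

lemma u_dec: "u (Suc k) \<le> u k / 2"
proof -
  let ?s = "real k"
  have "(b - 2) * (?s + 1)^2 \<le> (b - 2) * ?s^2"
    using ba a1 by (intro mult_left_mono_neg) (auto simp: power2_eq_square intro!: mult_mono)
  then have "2 powr ((b - 2) * (?s + 1)^2 - (?s + 1)) \<le> 2 powr ((b - 2) * ?s^2 - ?s - 1)" by (intro pw_mono) simp
  moreover have "2 powr (- ((?s + 1)^2)) \<le> 2 powr (- (?s^2) - 1)" by (intro pw_mono) (simp add: power2_eq_square algebra_simps)
  ultimately show ?thesis unfolding u_def by (simp add: powr_diff add.commute)
qed

lemma u_antimono: "k \<le> k' \<Longrightarrow> u k' \<le> u k"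
proof (induction k' rule: dec_induct)
  case (step n) then show ?case using u_dec[of n] u_pos[of n] by linarith
qed simp

lemma u_antimono2: "k < k' \<Longrightarrow> 2 * u k' \<le> u k"
  using u_dec[of k] u_antimono[of "Suc k" k'] by simp

lemma u_le_H: "u k \<le> 4 * 2 powr (- real k)"
proof -
  have "(b - 2) * (real k)^2 \<le> 0" using ba a1 by (intro mult_nonpos_nonneg) auto
  then have "2 powr ((b - 2) * (real k)^2 - real k) \<le> 2 powr (- real k)"
    by (intro pw_mono) auto
  moreover have "2 powr (- ((real k)^2)) \<le> 2 powr (- real k)" using sq_ge[of k] by (intro pw_mono) simp
  ultimately show ?thesis unfolding u_def by (rule lin2)
qed

lemma u_le_D: "u k \<le> 4 * D k powr (2 - b)"
proof -
  have "2 powr ((b - 2) * (real k)^2 - real k) \<le> 2 powr (- ((real k)^2) * (2 - b))"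
    by (intro pw_mono) (simp add: algebra_simps)
  moreover have "(real k)^2 * 1 \<le> (real k)^2 * b" using b1 by (intro mult_left_mono) auto
  then have "2 powr (- ((real k)^2)) \<le> 2 powr (- ((real k)^2) * (2 - b))"
    by (intro pw_mono) (auto simp: algebra_simps)
  ultimately show ?thesis unfolding u_def Dpow by (rule lin2)
qed

lemma Dpow_le: "D k powr (2 - b) \<le> D k powr (1 - a)"
  using ba D_pos[of k] D_le1[of k] by (intro powr_mono') auto


end


lemma compact_sparse:
  fixes S :: "real set"
  assumes S: "S \<subseteq> {0..1}" "0 \<in> S" and fin: "\<And>t. t > 0 \<Longrightarrow> finite (S \<inter> {t..})"
  shows "compact S"
proof (subst compact_eq_bounded_closed, intro conjI)
  show "bounded S" using S(1) bounded_subset[of "{0..1::real}" S] by simp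
  show "closed S" unfolding closed_def open_dist
  proof (intro ballI)
    fix y assume "y \<in> - S"
    then have y: "y \<notin> S" by simp
    show "\<exists>e>0. \<forall>z. dist z y < e \<longrightarrow> z \<in> - S"
    proof (cases "y > 0")
      case True
      obtain d where d: "d > 0" "\<forall>x\<in>S \<inter> {y/2..}. x \<noteq> y \<longrightarrow> d \<le> dist y x"
        using finite_set_avoid[OF fin[of "y/2"]] True by auto
      show ?thesis
      proof (intro exI[of _ "min d (y/2)"] conjI allI impI)
        show "min d (y/2) > 0" using d True by simp
        fix z assume z: "dist z y < min d (y/2)"
        show "z \<in> - S"
        proof
          assume zS: "z \<in> S"
          have "\<bar>z - y\<bar> < y/2" using z by (simp add: dist_real_def)
          then have "z \<ge> y/2" by linarith
          then have "d \<le> dist y z" using d zS y by auto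
          then show False using z by (simp add: dist_commute)
        qed
      qed
    next
      case False
      then have "y < 0" using y S(2) by (cases "y = 0") auto
      show ?thesis
      proof (intro exI[of _ "- y"] conjI allI impI)
        show "- y > 0" using \<open>y < 0\<close> by simp
        fix z assume "dist z y < - y"
        then have "z < 0" by (simp add: dist_real_def abs_less_iff)
        then show "z \<in> - S" using S(1) by auto
      qed
    qed
  qed
qed

lemma isolated_sparse:
  fixes S :: "real set"
  assumes fin: "\<And>t. t > 0 \<Longrightarrow> finite (S \<inter> {t..})" and x: "x > 0"
  shows "\<exists>d>0. \<forall>y\<in>S. dist y x < d \<longrightarrow> y = x"
proof -
  obtain d where d: "d > 0" "\<forall>z\<in>S \<inter> {x/2..}. z \<noteq> x \<longrightarrow> d \<le> dist x z"
    using finite_set_avoid[OF fin[of "x/2"]] x by auto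
  show ?thesis
  proof (intro exI[of _ "min d (x/2)"] conjI ballI impI)
    show "min d (x/2) > 0" using d x by simp
    fix y assume y: "y \<in> S" "dist y x < min d (x/2)"
    have "\<bar>y - x\<bar> < x/2" using y by (simp add: dist_real_def)
    then have "y \<ge> x/2" by linarith
    show "y = x"
    proof (rule ccontr)
      assume "y \<noteq> x"
      then have "d \<le> dist x y" using d y \<open>y \<ge> x/2\<close> by auto
      then show False using y by (simp add: dist_commute)
    qed
  qed
qed

context cons
begin

definition pt :: "nat \<Rightarrow> nat \<Rightarrow> nat \<Rightarrow> real" where "pt k j i = u k + real j * D k + real i * eta k"
definition blk :: "nat \<Rightarrow> real set" where "blk k = (\<lambda>(j,i). pt k j i) ` ({..<m k} \<times> {..<L k})"
definition X :: "real set" where "X = insert 0 (\<Union>k\<in>{3..}. blk k)"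

lemma ieta_le: "i < L k \<Longrightarrow> real i * eta k \<le> D k / 4"
proof -
  assume "i < L k"
  then have "real i * eta k \<le> real (L k) * eta k" using eta_pos[of k] by (intro mult_right_mono) auto
  then show ?thesis using Leta[of k] by linarith
qed

lemma eta_le: "eta k \<le> D k / 4"
proof -
  have "1 * eta k \<le> real (L k) * eta k" using L_pos[of k] eta_pos[of k] by (intro mult_right_mono) auto
  then show ?thesis using Leta[of k] by linarith
qed

lemma pt_lo: "u k + real j * D k \<le> pt k j i"
  unfolding pt_def using eta_pos[of k] by simp

lemma pt_hi: "i < L k \<Longrightarrow> pt k j i \<le> u k + real j * D k + D k / 4"
  unfolding pt_def using ieta_le by simp

lemma pt_col: "i < L k \<Longrightarrow> pt k j i \<in> {u k + real j * D k .. u k + real j * D k + real (L k) * eta k}"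
proof -
  assume i: "i < L k"
  then have "real i * eta k \<le> real (L k) * eta k" using eta_pos[of k] by (intro mult_right_mono) auto
  then show ?thesis using pt_lo[of k j i] by (simp add: pt_def)
qed

lemma pt_range: assumes "j < m k" "i < L k" shows "u k \<le> pt k j i" "pt k j i < 2 * u k"
proof -
  have "0 \<le> real j * D k" using D_pos[of k] by simp
  then show "u k \<le> pt k j i" using pt_lo[of k j i] by linarith
  have "real j + 1 \<le> real (m k)" using assms by linarith
  then have "(real j + 1) * D k \<le> real (m k) * D k" using D_pos[of k] by (intro mult_right_mono) auto
  then have "real j * D k + D k / 4 < real (m k) * D k" using D_pos[of k] by (simp add: algebra_simps)
  then show "pt k j i < 2 * u k" using pt_hi[OF assms(2), of j] mD_le[of k] u_pos[of k] by linarith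
qed

lemma pt_sep:
  assumes "j < m k" "i < L k" "j' < m k" "i' < L k" "j \<noteq> j'"
  shows "3 * D k / 4 \<le> \<bar>pt k j i - pt k j' i'\<bar>"
proof -
  { fix j i j' i' :: nat assume a: "i < L k" "i' < L k" "j < j'"
    have "real j + 1 \<le> real j'" using a by linarith
    then have "(real j + 1) * D k \<le> real j' * D k" using D_pos[of k] by (intro mult_right_mono) auto
    then have "pt k j i + 3 * D k / 4 \<le> pt k j' i'"
      using pt_hi[OF a(1), of j] pt_lo[of k j' i'] by (simp add: algebra_simps)
    then have "3 * D k / 4 \<le> \<bar>pt k j i - pt k j' i'\<bar>" by linarith }
  note * = this
  show ?thesis
  proof (cases "j < j'")
    case True then show ?thesis using *[OF assms(2,4)] by blast
  next
    case False then have "j' < j" using assms(5) by linarith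
    then show ?thesis using *[OF assms(4,2), of j' j] by (simp add: abs_minus_commute)
  qed
qed

lemma pt_sep_eta:
  assumes "j < m k" "i < L k" "j' < m k" "i' < L k" "(j, i) \<noteq> (j', i')"
  shows "eta k \<le> \<bar>pt k j i - pt k j' i'\<bar>"
proof (cases "j = j'")
  case True
  then have "i \<noteq> i'" using assms by auto
  then have "1 \<le> \<bar>real i - real i'\<bar>" by linarith
  then have "1 * eta k \<le> \<bar>real i - real i'\<bar> * eta k" using eta_pos[of k] by (intro mult_right_mono) auto
  also have "\<dots> = \<bar>pt k j i - pt k j' i'\<bar>" using True eta_pos[of k]
    by (simp add: pt_def abs_mult left_diff_distrib[symmetric])
  finally show ?thesis by simp
next
  case False
  then show ?thesis using pt_sep[OF assms(1-4) False] eta_le[of k] D_pos[of k] by linarith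
qed

lemma pt_inj: "inj_on (\<lambda>(j,i). pt k j i) ({..<m k} \<times> {..<L k})"
proof (rule inj_onI)
  fix p q assume "p \<in> {..<m k} \<times> {..<L k}" "q \<in> {..<m k} \<times> {..<L k}"
      "(\<lambda>(j,i). pt k j i) p = (\<lambda>(j,i). pt k j i) q"
  then show "p = q" using pt_sep_eta[of "fst p" k "snd p" "fst q" "snd q"] eta_pos[of k]
    by (cases p, cases q) (auto)
qed

lemma card_blk: "card (blk k) = m k * L k"
  unfolding blk_def by (simp add: card_image[OF pt_inj] card_cartesian_product)

lemma finite_blk: "finite (blk k)" by (simp add: blk_def)

lemma blk_range: "x \<in> blk k \<Longrightarrow> u k \<le> x \<and> x < 2 * u k"
  unfolding blk_def using pt_range by auto

lemma u3: "k \<ge> 3 \<Longrightarrow> 2 * u k \<le> 1"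
proof -
  assume "k \<ge> 3"
  then have "u k \<le> u 3" by (rule u_antimono)
  also have "\<dots> \<le> 4 * 2 powr (- real (3::nat))" by (rule u_le_H)
  also have "\<dots> = 1/2" by (simp add: powr_minus)
  finally show ?thesis by simp
qed

lemma blk_01: "k \<ge> 3 \<Longrightarrow> blk k \<subseteq> {0..1}"
  using blk_range u3 u_pos by fastforce

lemma X_01: "X \<subseteq> {0..1}" unfolding X_def using blk_01 by auto

lemma blk_unique: "x \<in> blk k \<Longrightarrow> x \<in> blk k' \<Longrightarrow> k = k'"
proof (rule ccontr)
  assume x: "x \<in> blk k" "x \<in> blk k'" and ne: "k \<noteq> k'"
  { fix k k' assume "x \<in> blk k" "x \<in> blk k'" "k < k'"
    then have False using blk_range[of x k] blk_range[of x k'] u_antimono2[of k k'] by linarith }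
  then show False using x ne by (metis linorder_neqE_nat)
qed

lemma two_pow_ge: "real k \<le> 2 powr real k"
proof -
  have "k < 2 ^ k" by (rule less_exp)
  then have "real k < 2 ^ k" by (metis of_nat_less_iff of_nat_numeral of_nat_power)
  then show ?thesis by (simp add: powr_realpow)
qed

lemma X_fin: "t > 0 \<Longrightarrow> finite (X \<inter> {t..})"
proof -
  assume t: "t > 0"
  have "X \<inter> {t..} \<subseteq> insert 0 (\<Union>k\<in>{..nat \<lceil>8/t\<rceil>}. blk k)"
  proof
    fix x assume x: "x \<in> X \<inter> {t..}"
    show "x \<in> insert 0 (\<Union>k\<in>{..nat \<lceil>8/t\<rceil>}. blk k)"
    proof (cases "x = 0")
      case False
      then obtain k where k: "x \<in> blk k" using x by (auto simp: X_def)
      have "t < 2 * u k" using blk_range[OF k] x by auto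
      also have "\<dots> \<le> 8 * 2 powr (- real k)" using u_le_H[of k] by simp
      finally have "t * 2 powr real k < 8" by (simp add: powr_minus field_simps)
      then have "t * real k < 8" using two_pow_ge[of k] t
        by (meson le_less_trans mult_left_mono less_imp_le)
      then have "real k < 8 / t" using t by (simp add: field_simps)
      then have "k \<le> nat \<lceil>8/t\<rceil>" by linarith
      then show ?thesis using k by auto
    qed simp
  qed
  then show ?thesis by (rule finite_subset) (simp add: finite_blk)
qed

lemma X_compact: "compact X"
  by (rule compact_sparse[OF X_01 _ X_fin]) (simp add: X_def)

end


context cons
begin

definition f0 :: "real \<Rightarrow> real" where
  "f0 x = (if \<exists>k. x \<in> blk k then
     (let k = (THE k. x \<in> blk k) in D k ^ 2 / eta k * frac ((x - u k) / D k)) else 0)"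

lemma f0_pt: assumes "j < m k" "i < L k" shows "f0 (pt k j i) = real i * D k"
proof -
  have mem: "pt k j i \<in> blk k" using assms by (auto simp: blk_def)
  have the: "(THE k'. pt k j i \<in> blk k') = k" using mem blk_unique by blast
  have fr: "frac ((pt k j i - u k) / D k) = real i * eta k / D k"
  proof (subst frac_unique_iff, intro conjI)
    have "(pt k j i - u k) / D k - real i * eta k / D k = real j"
      using D_pos[of k] by (simp add: pt_def field_simps)
    then show "(pt k j i - u k) / D k - real i * eta k / D k \<in> \<int>" by simp
    show "0 \<le> real i * eta k / D k" using D_pos[of k] eta_pos[of k] by simp
    have "real i * eta k \<le> D k / 4" by (rule ieta_le[OF assms(2)])
    then show "real i * eta k / D k < 1" using D_pos[of k] by (simp add: field_simps)
  qed
  have "f0 (pt k j i) = D k ^ 2 / eta k * frac ((pt k j i - u k) / D k)"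
    using mem unfolding f0_def the by (simp add: Let_def the exI[of _ k])
  also have "\<dots> = D k ^ 2 / eta k * (real i * eta k / D k)" by (simp only: fr)
  also have "\<dots> = real i * D k" using D_pos[of k] eta_pos[of k] by (simp add: power2_eq_square field_simps)
  finally show ?thesis .
qed

lemma f0_blk: assumes "x \<in> blk k" shows "0 \<le> f0 x" "f0 x \<le> 2 powr (- real k)"
proof -
  obtain j i where ji: "j < m k" "i < L k" "x = pt k j i" using assms by (auto simp: blk_def)
  have "real i * D k \<le> real (L k) * D k" using ji D_pos[of k] by (intro mult_right_mono) auto
  also have "real (L k) * D k = 2 powr (- real k)"
    unfolding L_real D_def by (rule pw_mult_eq) simp
  finally show "f0 x \<le> 2 powr (- real k)" using f0_pt[OF ji(1,2)] ji(3) by simp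
  show "0 \<le> f0 x" using f0_pt[OF ji(1,2)] ji(3) D_pos[of k] by simp
qed

lemma zero_not_blk: "0 \<notin> blk k" using blk_range[of 0 k] u_pos[of k] by auto

lemma f0_zero: "f0 0 = 0" using zero_not_blk by (simp add: f0_def)

lemma f0_01: "x \<in> X \<Longrightarrow> 0 \<le> f0 x \<and> f0 x \<le> 1"
proof -
  assume "x \<in> X"
  then consider "x = 0" | k where "x \<in> blk k" by (auto simp: X_def)
  then show ?thesis
  proof cases
    case 1 then show ?thesis by (simp add: f0_zero)
  next
    case 2
    have "2 powr (- real k) \<le> 2 powr 0" by (rule pw_mono) simp
    then show ?thesis using f0_blk[OF 2] by simp
  qed
qed

lemma f0_cont: "continuous_on X f0"
  unfolding continuous_on_iff
proof (intro ballI allI impI)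
  fix x e :: real assume x: "x \<in> X" and e: "e > 0"
  show "\<exists>d>0. \<forall>x'\<in>X. dist x' x < d \<longrightarrow> dist (f0 x') (f0 x) < e"
  proof (cases "x = 0")
    case False
    then have "x > 0" using x X_01 by force
    then obtain d where d: "d > 0" "\<forall>y\<in>X. dist y x < d \<longrightarrow> y = x"
      using isolated_sparse[OF X_fin] by blast
    show ?thesis using d e by (intro exI[of _ d]) auto
  next
    case True
    obtain n :: nat where n: "1/e < real n" using reals_Archimedean2 by blast
    define k0 where "k0 = max n 3"
    have "1/e < 2 powr real k0"
      using n two_pow_ge[of k0] unfolding k0_def by (meson le_less_trans less_le_trans max.cobounded1 of_nat_le_iff)
    then have k0: "2 powr (- real k0) < e" using e by (simp add: powr_minus field_simps)
    show ?thesis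
    proof (intro exI[of _ "u k0"] conjI ballI impI)
      show "u k0 > 0" by (rule u_pos)
      fix x' assume x': "x' \<in> X" "dist x' x < u k0"
      show "dist (f0 x') (f0 x) < e"
      proof (cases "x' = 0")
        case True then show ?thesis using \<open>x = 0\<close> e by (simp add: f0_zero)
      next
        case False
        then obtain k where k: "x' \<in> blk k" using x' by (auto simp: X_def)
        have "x' < u k0" using x' True blk_range[OF k] u_pos[of k] by (simp add: dist_real_def)
        then have "k0 < k" using blk_range[OF k] u_antimono[of k k0] by (cases "k \<le> k0") auto
        then have "2 powr (- real k) \<le> 2 powr (- real k0)" by (intro pw_mono) simp
        then show ?thesis using f0_blk[OF k] k0 \<open>x = 0\<close> by (simp add: f0_zero dist_real_def)
      qed
    qed
  qed
qed

lemma f0_uc: "uniformly_continuous_on X f0"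
  by (rule compact_uniformly_continuous[OF f0_cont X_compact])

end


context cons
begin

lemma blk_X: "k \<ge> 3 \<Longrightarrow> blk k \<subseteq> X" by (auto simp: X_def)

lemma gsetX: "\<delta> > 0 \<Longrightarrow> finite (gset \<delta> X)"
  using count1_interval(1)[of \<delta> X 0 1] X_01 by simp

lemma graph_f0_box: "graph_of X f0 \<subseteq> {0..1} \<times> {0..1}"
  using X_01 f0_01 by (auto simp: graph_of_def)

lemma X_lower: "ereal a \<le> upper_box_dim X"
proof (rule ubd_lower[where q = "\<lambda>k. (b * (real k)^2 + 2 * real k + 2) / a + 1"
      and p = "\<lambda>k. b * (real k)^2 - 2 * real k" and K = 3])
  show "filterlim (\<lambda>k::nat. (b * (real k)^2 + 2 * real k + 2) / a + 1) at_top sequentially"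
    using a0 b1 by real_asymp
  show "((\<lambda>k::nat. (b * (real k)^2 - 2 * real k) / ((b * (real k)^2 + 2 * real k + 2) / a + 1)) \<longlongrightarrow> a) sequentially"
    using a0 b1 by real_asymp
  fix k :: nat assume k: "3 \<le> k"
  have e: "2 powr (- ((b * (real k)^2 + 2 * real k + 2) / a + 1)) = eta k / 2"
  proof -
    have "eta k * 2 powr (- 1) = 2 powr (- ((b * (real k)^2 + 2 * real k + 2) / a + 1))"
      unfolding eta_def by (rule pw_mult_eq) (simp add: minus_divide_left)
    then show ?thesis by (simp add: powr_minus)
  qed
  have "2 powr (b * (real k)^2 - 2 * real k) \<le> real (m k * L k)" using mL_ge[of k] by simp
  also have "m k * L k = card (blk k)" by (simp add: card_blk)
  also have "card (blk k) \<le> grid_count (eta k / 2) X"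
  proof (rule count1_sep)
    show "eta k / 2 > 0" using eta_pos[of k] by simp
    show "finite (blk k)" by (rule finite_blk)
    show "blk k \<subseteq> X" using k by (rule blk_X)
    show "finite (gset (eta k / 2) X)" using eta_pos[of k] by (intro gsetX) simp
    fix p q assume pq: "p \<in> blk k" "q \<in> blk k" "p \<noteq> q"
    then obtain j i j' i' where "j < m k" "i < L k" "j' < m k" "i' < L k" "p = pt k j i" "q = pt k j' i'"
      by (auto simp: blk_def)
    then show "eta k / 2 < \<bar>p - q\<bar>" using pt_sep_eta[of j k i j' i'] pq eta_pos[of k] by force
  qed
  finally show "2 powr (b * (real k)^2 - 2 * real k)
      \<le> real (grid_count (2 powr (- ((b * (real k)^2 + 2 * real k + 2) / a + 1))) X)"
    unfolding e by simp
qed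

lemma graph_lower: "ereal b \<le> upper_box_dim (graph_of X f0)"
proof (rule ubd_lower[where q = "\<lambda>k. (real k)^2 + 1"
      and p = "\<lambda>k. b * (real k)^2 - 2 * real k" and K = 3])
  show "filterlim (\<lambda>k::nat. (real k)^2 + 1) at_top sequentially" by real_asymp
  show "((\<lambda>k::nat. (b * (real k)^2 - 2 * real k) / ((real k)^2 + 1)) \<longlongrightarrow> b) sequentially"
    using b1 by real_asymp
  fix k :: nat assume k: "3 \<le> k"
  have e: "2 powr (- ((real k)^2 + 1)) = D k / 2"
  proof -
    have "D k * 2 powr (- 1) = 2 powr (- ((real k)^2 + 1))"
      unfolding D_def by (rule pw_mult_eq) simp
    then show ?thesis by (simp add: powr_minus)
  qed
  define g where "g = (\<lambda>(j,i). (pt k j i, real i * D k))"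
  define Q where "Q = g ` ({..<m k} \<times> {..<L k})"
  have injg: "inj_on g ({..<m k} \<times> {..<L k})"
  proof (rule inj_onI)
    fix x y assume "x \<in> {..<m k} \<times> {..<L k}" "y \<in> {..<m k} \<times> {..<L k}" "g x = g y"
    then show "x = y" using pt_inj[of k] unfolding g_def inj_on_def by (cases x, cases y) auto
  qed
  have "2 powr (b * (real k)^2 - 2 * real k) \<le> real (m k * L k)" using mL_ge[of k] by simp
  also have "m k * L k = card Q" unfolding Q_def by (simp add: card_image[OF injg] card_cartesian_product)
  also have "card Q \<le> grid_count (D k / 2) (graph_of X f0)"
  proof (rule count2_sep)
    show "D k / 2 > 0" using D_pos[of k] by simp
    show "finite Q" by (simp add: Q_def)
    show "Q \<subseteq> graph_of X f0"
    proof
      fix z assume "z \<in> Q"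
      then obtain j i where ji: "j < m k" "i < L k" "z = (pt k j i, real i * D k)" by (auto simp: Q_def g_def)
      have "pt k j i \<in> X" using blk_X[OF k] ji by (auto simp: blk_def)
      then show "z \<in> graph_of X f0" using ji f0_pt[OF ji(1,2)] by (auto simp: graph_of_def)
    qed
    show "finite (gset (D k / 2) (graph_of X f0))"
      using count2_box(1)[OF _ graph_f0_box, of "D k / 2"] D_pos[of k] by simp
    fix p q assume pq: "p \<in> Q" "q \<in> Q" "p \<noteq> q"
    then obtain j i j' i' where ji: "j < m k" "i < L k" "j' < m k" "i' < L k"
       "p = (pt k j i, real i * D k)" "q = (pt k j' i', real i' * D k)"
      by (auto simp: Q_def g_def)
    show "D k / 2 < \<bar>fst p - fst q\<bar> \<or> D k / 2 < \<bar>snd p - snd q\<bar>"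
    proof (cases "j = j'")
      case False
      then show ?thesis using pt_sep[OF ji(1-4) False] D_pos[of k] ji(5,6) by simp
    next
      case True
      then have "i \<noteq> i'" using pq ji by auto
      then have "1 \<le> \<bar>real i - real i'\<bar>" by linarith
      then have "1 * D k \<le> \<bar>real i - real i'\<bar> * D k" using D_pos[of k] by (intro mult_right_mono) auto
      also have "\<dots> = \<bar>real i * D k - real i' * D k\<bar>" using D_pos[of k] by (simp add: abs_mult_pos left_diff_distrib[symmetric])
      finally show ?thesis using ji(5,6) D_pos[of k] by simp
    qed
  qed
  finally show "2 powr (b * (real k)^2 - 2 * real k) \<le> real (grid_count (2 powr (- ((real k)^2 + 1))) (graph_of X f0))"
    unfolding e by simp
qed

end


lemma pw_split: "(0::real) < \<delta> \<Longrightarrow> \<delta> powr (1 - c) = \<delta> * \<delta> powr (- c)"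
  using powr_add[of \<delta> 1 "- c"] by simp

lemma pw_ge1': "(0::real) < \<delta> \<Longrightarrow> \<delta> \<le> 1 \<Longrightarrow> 0 \<le> c \<Longrightarrow> 1 \<le> \<delta> powr (- c)"
proof -
  assume "0 < \<delta>" "\<delta> \<le> 1" "0 \<le> c"
  then have "\<delta> powr c \<le> 1" by (intro powr_le1) auto
  moreover have "\<delta> powr c > 0" using \<open>0 < \<delta>\<close> by simp
  ultimately show ?thesis using \<open>0 < \<delta>\<close> by (simp add: powr_minus field_simps)
qed

lemma pw_anti: "(0::real) < x \<Longrightarrow> x \<le> y \<Longrightarrow> 0 \<le> c \<Longrightarrow> y powr (- c) \<le> x powr (- c)"
  by (rule powr_mono2') auto

lemma ln2_ge: "ln (2::real) \<ge> 1/2"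
proof -
  have "ln (1/2::real) \<le> 1/2 - 1" by (rule ln_le_minus_one) simp
  then show ?thesis by (simp add: ln_div)
qed

context cons
begin

lemma pt_le_mD: assumes "j < m k" "i < L k" shows "pt k j i \<le> u k + real (m k) * D k"
proof -
  have "real j + 1 \<le> real (m k)" using assms by linarith
  then have "(real j + 1) * D k \<le> real (m k) * D k" using D_pos[of k] by (intro mult_right_mono) auto
  then show ?thesis using pt_hi[OF assms(2), of j] D_pos[of k] by (simp add: algebra_simps)
qed

lemma blk_sub: "blk k \<subseteq> {u k .. u k + real (m k) * D k}"
  using pt_range(1) pt_le_mD by (auto simp: blk_def)

lemma blk_count:
  assumes d: "0 < \<delta>" "\<delta> \<le> 1"
  shows "real (grid_count \<delta> (blk k)) \<le> 6 * \<delta> powr (- a)"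
proof -
  have ge1: "1 \<le> \<delta> powr (- a)" using d a0 by (intro pw_ge1') auto
  consider "D k \<le> \<delta>" | "eta k \<le> \<delta>" "\<delta> < D k" | "\<delta> < eta k" by linarith
  then show ?thesis
  proof cases
    case 1
    have c1: "real (grid_count \<delta> (blk k)) \<le> (u k + real (m k) * D k - u k) / \<delta> + 2"
      using count1_interval(2)[OF d(1) blk_sub] D_pos[of k] by simp
    have "D k powr (1 - a) \<le> \<delta> powr (1 - a)" using 1 D_pos[of k] a1 by (intro powr_mono2) auto
    then have "real (m k) * D k \<le> 2 * \<delta> powr (1 - a)" using mD_a[of k] by linarith
    then have "real (m k) * D k / \<delta> \<le> 2 * \<delta> powr (1 - a) / \<delta>" using d by (intro divide_right_mono) auto
    also have "2 * \<delta> powr (1 - a) / \<delta> = 2 * \<delta> powr (- a)" using d by (simp add: pw_split)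
    finally have "real (m k) * D k / \<delta> \<le> 2 * \<delta> powr (- a)" .
    then show ?thesis using c1 ge1 by simp
  next
    case 2
    let ?c = "\<lambda>j. {u k + real j * D k .. u k + real j * D k + real (L k) * eta k}"
    have sub: "blk k \<subseteq> (\<Union>j\<in>{..<m k}. ?c j)" using pt_col by (auto simp: blk_def)
    have fin: "finite (gset \<delta> (\<Union>j\<in>{..<m k}. ?c j))"
    proof -
      have "\<And>j. finite (gset \<delta> (?c j))"
      proof -
        fix j
        have "u k + real j * D k \<le> u k + real j * D k + real (L k) * eta k" using eta_pos[of k] by simp
        then show "finite (gset \<delta> (?c j))" by (rule count1_interval(1)[OF d(1) order.refl])
      qed
      then show ?thesis unfolding gset_UN by simp
    qed
    have "grid_count \<delta> (blk k) \<le> grid_count \<delta> (\<Union>j\<in>{..<m k}. ?c j)" by (rule count_mono[OF fin sub])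
    also have "\<dots> \<le> (\<Sum>j\<in>{..<m k}. grid_count \<delta> (?c j))" by (rule count_UN) simp
    finally have S1a: "grid_count \<delta> (blk k) \<le> (\<Sum>j\<in>{..<m k}. grid_count \<delta> (?c j))" .
    have S1: "real (grid_count \<delta> (blk k)) \<le> (\<Sum>j\<in>{..<m k}. real (grid_count \<delta> (?c j)))"
      unfolding of_nat_sum[symmetric] using S1a by (simp only: of_nat_le_iff)
    have S2: "(\<Sum>j\<in>{..<m k}. real (grid_count \<delta> (?c j))) \<le> (\<Sum>j\<in>{..<m k}. real (L k) * eta k / \<delta> + 2)"
    proof (rule sum_mono)
      fix j
      have "u k + real j * D k \<le> u k + real j * D k + real (L k) * eta k" using eta_pos[of k] by simp
      then have "real (grid_count \<delta> (?c j)) \<le> ((u k + real j * D k + real (L k) * eta k) - (u k + real j * D k)) / \<delta> + 2"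
        by (rule count1_interval(2)[OF d(1) order.refl])
      then show "real (grid_count \<delta> (?c j)) \<le> real (L k) * eta k / \<delta> + 2" by simp
    qed
    have S2': "(\<Sum>j\<in>{..<m k}. real (L k) * eta k / \<delta> + 2) = real (m k) * real (L k) * eta k / \<delta> + 2 * real (m k)"
      by (simp add: algebra_simps)
    have "real (m k) * real (L k) * eta k \<le> eta k powr (- a) * eta k"
      using mL_le_eta[of k] eta_pos[of k] by (intro mult_right_mono) auto
    also have "eta k powr (- a) * eta k = eta k powr (1 - a)" using pw_split[OF eta_pos[of k], of a] by simp
    also have "eta k powr (1 - a) \<le> \<delta> powr (1 - a)" using 2 eta_pos[of k] a1 by (intro powr_mono2) auto
    finally have "real (m k) * real (L k) * eta k / \<delta> \<le> \<delta> powr (1 - a) / \<delta>" using d by (intro divide_right_mono) auto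
    also have "\<delta> powr (1 - a) / \<delta> = \<delta> powr (- a)" using d by (simp add: pw_split)
    finally have S3: "real (m k) * real (L k) * eta k / \<delta> \<le> \<delta> powr (- a)" .
    have "2 powr (a * (real k)^2) = D k powr (- a)" by (simp add: Dpow mult.commute)
    also have "\<dots> \<le> \<delta> powr (- a)" using 2 d a0 by (intro pw_anti) auto
    finally have S4: "2 * real (m k) \<le> 4 * \<delta> powr (- a)" using m_le_a[of k] by linarith
    show ?thesis using S1 S2 S2' S3 S4 by linarith
  next
    case 3
    have "grid_count \<delta> (blk k) \<le> 2 * card (blk k)" by (rule count1_finite[OF d(1) finite_blk])
    then have "real (grid_count \<delta> (blk k)) \<le> real (2 * card (blk k))" by (simp only: of_nat_le_iff)
    then have "real (grid_count \<delta> (blk k)) \<le> 2 * (real (m k) * real (L k))" by (simp add: card_blk)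
    moreover have "real (m k) * real (L k) \<le> eta k powr (- a)" by (rule mL_le_eta)
    moreover have "eta k powr (- a) \<le> \<delta> powr (- a)" using 3 d a0 by (intro pw_anti) auto
    ultimately show ?thesis using ge1 by linarith
  qed
qed


lemma gblk_count:
  assumes d: "0 < \<delta>" "\<delta> \<le> 1" and M: "M \<ge> 0" and fb: "\<And>x. x \<in> blk k \<Longrightarrow> \<bar>f x\<bar> \<le> M"
  shows "real (grid_count \<delta> (graph_of (blk k) f)) \<le> (8 * M + 8) * \<delta> powr (- b)"
proof (cases "D k \<le> \<delta>")
  case True
  have sub: "graph_of (blk k) f \<subseteq> {u k .. u k + real (m k) * D k} \<times> {- M .. M}"
    using blk_sub fb by (force simp: graph_of_def abs_le_iff)
  have c: "real (grid_count \<delta> (graph_of (blk k) f))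
     \<le> ((u k + real (m k) * D k - u k) / \<delta> + 2) * ((M - - M) / \<delta> + 2)"
    by (rule count2_box(2)[OF d(1) sub]) (use D_pos[of k] M in auto)
  define t where "t = \<delta> powr (1 - b)"
  have t1: "1 \<le> t" unfolding t_def using pw_ge1'[OF d, of "b - 1"] b1 by simp
  have tb: "t / \<delta> = \<delta> powr (- b)" unfolding t_def using d by (simp add: pw_split)
  have "D k powr (2 - b) \<le> \<delta> powr (2 - b)" using True D_pos[of k] ba a1 by (intro powr_mono2) auto
  then have "real (m k) * D k \<le> 2 * \<delta> powr (2 - b)" using mD_b[of k] by linarith
  then have "real (m k) * D k / \<delta> \<le> 2 * \<delta> powr (2 - b) / \<delta>" using d by (intro divide_right_mono) auto
  also have "2 * \<delta> powr (2 - b) / \<delta> = 2 * t"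
    unfolding t_def using d pw_split[OF d(1), of "b - 1"] by simp
  finally have A: "(u k + real (m k) * D k - u k) / \<delta> + 2 \<le> 4 * t" using t1 by simp
  have B: "(M - - M) / \<delta> + 2 \<le> (2 * M + 2) / \<delta>"
    using d by (simp add: field_simps)
  have "((u k + real (m k) * D k - u k) / \<delta> + 2) * ((M - - M) / \<delta> + 2) \<le> (4 * t) * ((2 * M + 2) / \<delta>)"
    by (rule mult_mono[OF A B]) (use t1 M d in auto)
  also have "(4 * t) * ((2 * M + 2) / \<delta>) = (8 * M + 8) * (t / \<delta>)" by (simp add: algebra_simps add_divide_distrib)
  finally show ?thesis using c tb by simp
next
  case False
  have "grid_count \<delta> (graph_of (blk k) f) \<le> 4 * card (blk k)" by (rule count2_graph_finite[OF d(1) finite_blk])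
  then have "real (grid_count \<delta> (graph_of (blk k) f)) \<le> real (4 * card (blk k))" by (simp only: of_nat_le_iff)
  then have "real (grid_count \<delta> (graph_of (blk k) f)) \<le> 4 * (real (m k) * real (L k))" by (simp add: card_blk)
  moreover have "real (m k) * real (L k) \<le> 2 * D k powr (- b)" by (rule mL_le_D)
  moreover have "D k powr (- b) \<le> \<delta> powr (- b)" using False d b1 by (intro pw_anti) auto
  moreover have "0 \<le> M * \<delta> powr (- b)" using M by simp
  ultimately show ?thesis by (simp add: algebra_simps)
qed

end


context cons
begin

lemma Dk_ln: assumes "3 \<le> k" "0 < \<delta>" "\<delta> < D k" shows "real k \<le> ln (1/\<delta>)"
proof -
  have "ln \<delta> < ln (D k)" using assms D_pos[of k] by simp
  also have "ln (D k) = - ((real k)^2) * ln 2" by (simp add: D_def ln_powr)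
  finally have "(real k)^2 * ln 2 < ln (1/\<delta>)" using assms by (simp add: ln_div)
  moreover have "real k \<le> (real k)^2 * ln 2"
  proof -
    have "3 * real k \<le> real k * real k" using assms by (intro mult_right_mono) auto
    then have "real k \<le> (real k)^2 * (1/2)" using assms by (simp add: power2_eq_square)
    also have "\<dots> \<le> (real k)^2 * ln 2" using ln2_ge by (intro mult_left_mono) auto
    finally show ?thesis .
  qed
  ultimately show ?thesis by linarith
qed

lemma K_exists: assumes "0 < \<delta>" "\<delta> < D 3"
  obtains K where "3 \<le> K" "D (Suc K) \<le> \<delta>" "real K \<le> ln (1/\<delta>)"
proof -
  define S where "S = {k. 3 \<le> k \<and> \<delta> < D k}"
  have Sb: "S \<subseteq> {..nat \<lfloor>ln (1/\<delta>)\<rfloor>}"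
  proof
    fix k assume "k \<in> S"
    then have "real k \<le> ln (1/\<delta>)" using Dk_ln assms by (auto simp: S_def)
    then show "k \<in> {..nat \<lfloor>ln (1/\<delta>)\<rfloor>}" by (simp add: le_nat_iff le_floor_iff)
  qed
  have fin: "finite S" using finite_subset[OF Sb] by simp
  have "3 \<in> S" using assms by (simp add: S_def)
  define K where "K = Max S"
  have KS: "K \<in> S" unfolding K_def using fin \<open>3 \<in> S\<close> by (intro Max_in) auto
  have "Suc K \<notin> S" using Max_ge[OF fin, of "Suc K"] unfolding K_def[symmetric] by auto
  then have "D (Suc K) \<le> \<delta>" using KS by (auto simp: S_def)
  moreover have "real K \<le> ln (1/\<delta>)" using KS Dk_ln assms by (auto simp: S_def)
  moreover have "3 \<le> K" using KS by (simp add: S_def)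
  ultimately show ?thesis using that by blast
qed

lemma X_cover: assumes "3 \<le> K" shows "X \<subseteq> (\<Union>k\<in>{3..K}. blk k) \<union> {0 .. 2 * u (Suc K)}"
proof
  fix x assume "x \<in> X"
  then consider "x = 0" | k where "3 \<le> k" "x \<in> blk k" by (auto simp: X_def)
  then show "x \<in> (\<Union>k\<in>{3..K}. blk k) \<union> {0 .. 2 * u (Suc K)}"
  proof cases
    case 1 then show ?thesis using u_pos[of "Suc K"] by simp
  next
    case 2
    show ?thesis
    proof (cases "k \<le> K")
      case True then show ?thesis using 2 by auto
    next
      case False
      then have "u k \<le> u (Suc K)" by (intro u_antimono) simp
      then show ?thesis using blk_range[OF 2(2)] u_pos[of k] by auto
    qed
  qed
qed

lemma tail_le: assumes "D (Suc K) \<le> \<delta>" "0 < \<delta>" shows "2 * u (Suc K) \<le> 8 * \<delta> powr (2 - b)"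
proof -
  have "D (Suc K) powr (2 - b) \<le> \<delta> powr (2 - b)" using assms D_pos[of "Suc K"] ba a1 by (intro powr_mono2) auto
  then show ?thesis using u_le_D[of "Suc K"] by linarith
qed

lemma X_upper: "upper_box_dim X \<le> ereal a"
proof (rule ubd_upper[where C = 16 and r = "D 3"])
  show "0 \<le> a" using a0 by simp
  show "(0::real) < 16" by simp
  show "0 < D 3" by (rule D_pos)
  fix \<delta> :: real assume d: "0 < \<delta>" "\<delta> < D 3"
  obtain K where K: "3 \<le> K" "D (Suc K) \<le> \<delta>" "real K \<le> ln (1/\<delta>)" using K_exists[OF d] by blast
  have d1: "\<delta> \<le> 1" using d D_le1[of 3] by simp
  have ge1: "1 \<le> \<delta> powr (- a)" using d d1 a0 by (intro pw_ge1') auto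
  define T where "T = {0 .. 2 * u (Suc K)}"
  have T01: "T \<subseteq> {0..1}" using u3[of "Suc K"] K by (auto simp: T_def)
  have "\<And>k. k \<in> {3..K} \<Longrightarrow> blk k \<subseteq> {0..1}" using blk_01 by simp
  then have cov01: "(\<Union>k\<in>{3..K}. blk k) \<union> T \<subseteq> {0..1}" using T01 by (intro Un_least UN_least)
  have fin: "finite (gset \<delta> ((\<Union>k\<in>{3..K}. blk k) \<union> T))"
    using count1_interval(1)[OF d(1) cov01] by simp
  have "grid_count \<delta> X \<le> grid_count \<delta> ((\<Union>k\<in>{3..K}. blk k) \<union> T)"
    by (rule count_mono[OF fin]) (use X_cover[OF K(1)] in \<open>simp add: T_def\<close>)
  also have "\<dots> \<le> grid_count \<delta> (\<Union>k\<in>{3..K}. blk k) + grid_count \<delta> T" by (rule count_Un)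
  also have "grid_count \<delta> (\<Union>k\<in>{3..K}. blk k) \<le> (\<Sum>k\<in>{3..K}. grid_count \<delta> (blk k))" by (rule count_UN) simp
  finally have n1: "grid_count \<delta> X \<le> (\<Sum>k\<in>{3..K}. grid_count \<delta> (blk k)) + grid_count \<delta> T" by simp
  have r1: "real (grid_count \<delta> X) \<le> (\<Sum>k\<in>{3..K}. real (grid_count \<delta> (blk k))) + real (grid_count \<delta> T)"
    unfolding of_nat_sum[symmetric] of_nat_add[symmetric] using n1 by (simp only: of_nat_le_iff)
  have r2: "(\<Sum>k\<in>{3..K}. real (grid_count \<delta> (blk k))) \<le> (\<Sum>k\<in>{3..K}. 6 * \<delta> powr (- a))"
    by (intro sum_mono blk_count d(1) d1)
  have r3: "(\<Sum>k\<in>{3..K}. 6 * \<delta> powr (- a)) \<le> real K * (6 * \<delta> powr (- a))"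
  proof -
    have "(\<Sum>k\<in>{3..K}. 6 * \<delta> powr (- a)) = real (card {3..K}) * (6 * \<delta> powr (- a))" by simp
    also have "\<dots> \<le> real K * (6 * \<delta> powr (- a))" by (intro mult_right_mono) auto
    finally show ?thesis .
  qed
  have r4: "real (grid_count \<delta> T) \<le> (2 * u (Suc K) - 0) / \<delta> + 2"
    using count1_interval(2)[OF d(1), of T 0 "2 * u (Suc K)"] u_pos[of "Suc K"] by (simp add: T_def)
  have "2 * u (Suc K) \<le> 8 * \<delta> powr (1 - a)"
    using tail_le[OF K(2) d(1)] powr_mono'[of "1 - a" "2 - b" \<delta>] ba d d1 by linarith
  then have "2 * u (Suc K) / \<delta> \<le> 8 * \<delta> powr (1 - a) / \<delta>" using d by (intro divide_right_mono) auto
  also have "8 * \<delta> powr (1 - a) / \<delta> = 8 * \<delta> powr (- a)" using d by (simp add: pw_split)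
  finally have r5: "real (grid_count \<delta> T) \<le> 10 * \<delta> powr (- a)" using r4 ge1 by simp
  have "1 \<le> real K" using K by simp
  then have "1 * (10 * \<delta> powr (- a)) \<le> real K * (10 * \<delta> powr (- a))" using ge1 by (intro mult_right_mono) auto
  then have r6: "10 * \<delta> powr (- a) \<le> real K * (10 * \<delta> powr (- a))" by simp
  have r7: "real K * (16 * \<delta> powr (- a)) \<le> ln (1/\<delta>) * (16 * \<delta> powr (- a))"
    using K(3) ge1 by (intro mult_right_mono) auto
  show "real (grid_count \<delta> X) \<le> 16 * ln (1/\<delta>) * \<delta> powr (- a)"
    using r1 r2 r3 r5 r6 r7 by (simp add: algebra_simps)
qed


lemma graph_cover: assumes "3 \<le> K" and fb: "\<And>x. x \<in> X \<Longrightarrow> \<bar>f x\<bar> \<le> M"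
  shows "graph_of X f \<subseteq> (\<Union>k\<in>{3..K}. graph_of (blk k) f) \<union> ({0 .. 2 * u (Suc K)} \<times> {- M .. M})"
proof
  fix z assume "z \<in> graph_of X f"
  then obtain x where x: "x \<in> X" "z = (x, f x)" by (auto simp: graph_of_def)
  have "x \<in> (\<Union>k\<in>{3..K}. blk k) \<union> {0 .. 2 * u (Suc K)}" using X_cover[OF assms(1)] x(1) by blast
  then show "z \<in> (\<Union>k\<in>{3..K}. graph_of (blk k) f) \<union> ({0 .. 2 * u (Suc K)} \<times> {- M .. M})"
    using x fb[OF x(1)] by (auto simp: graph_of_def abs_le_iff)
qed

lemma graph_upper: assumes uc: "uniformly_continuous_on X f" shows "upper_box_dim (graph_of X f) \<le> ereal b"
proof -
  have "continuous_on X f" using uc by (rule uniformly_continuous_imp_continuous)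
  then have "compact (f ` X)" by (rule compact_continuous_image[OF _ X_compact])
  then have "bounded (f ` X)" by (rule compact_imp_bounded)
  then obtain B where B: "\<forall>y\<in>f ` X. \<bar>y\<bar> \<le> B" by (auto simp: bounded_real)
  define M where "M = max B 0"
  have M0: "M \<ge> 0" by (simp add: M_def)
  have fb: "\<And>x. x \<in> X \<Longrightarrow> \<bar>f x\<bar> \<le> M" using B by (force simp: M_def)
  show ?thesis
  proof (rule ubd_upper[where C = "28 * M + 28" and r = "D 3"])
    show "0 \<le> b" using b1 by simp
    show "0 < 28 * M + 28" using M0 by simp
    show "0 < D 3" by (rule D_pos)
    fix \<delta> :: real assume d: "0 < \<delta>" "\<delta> < D 3"
    obtain K where K: "3 \<le> K" "D (Suc K) \<le> \<delta>" "real K \<le> ln (1/\<delta>)" using K_exists[OF d] by blast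
    have d1: "\<delta> \<le> 1" using d D_le1[of 3] by simp
    have ge1: "1 \<le> \<delta> powr (- b)" using d d1 b1 by (intro pw_ge1') auto
    define T where "T = {0 .. 2 * u (Suc K)} \<times> {- M .. M}"
    have T01: "T \<subseteq> {0..1} \<times> {- M .. M}" using u3[of "Suc K"] K by (auto simp: T_def)
    have "\<And>k. k \<in> {3..K} \<Longrightarrow> graph_of (blk k) f \<subseteq> {0..1} \<times> {- M .. M}"
      using blk_01 fb blk_X by (force simp: graph_of_def abs_le_iff)
    then have cov01: "(\<Union>k\<in>{3..K}. graph_of (blk k) f) \<union> T \<subseteq> {0..1} \<times> {- M .. M}"
      using T01 by (intro Un_least UN_least)
    have fin: "finite (gset \<delta> ((\<Union>k\<in>{3..K}. graph_of (blk k) f) \<union> T))"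
      using count2_box(1)[OF d(1) cov01] M0 by simp
    have "grid_count \<delta> (graph_of X f) \<le> grid_count \<delta> ((\<Union>k\<in>{3..K}. graph_of (blk k) f) \<union> T)"
      by (rule count_mono[OF fin]) (use graph_cover[OF K(1) fb] in \<open>simp add: T_def\<close>)
    also have "\<dots> \<le> grid_count \<delta> (\<Union>k\<in>{3..K}. graph_of (blk k) f) + grid_count \<delta> T" by (rule count_Un)
    also have "grid_count \<delta> (\<Union>k\<in>{3..K}. graph_of (blk k) f) \<le> (\<Sum>k\<in>{3..K}. grid_count \<delta> (graph_of (blk k) f))"
      by (rule count_UN) simp
    finally have n1: "grid_count \<delta> (graph_of X f) \<le> (\<Sum>k\<in>{3..K}. grid_count \<delta> (graph_of (blk k) f)) + grid_count \<delta> T" by simp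
    have r1: "real (grid_count \<delta> (graph_of X f)) \<le> (\<Sum>k\<in>{3..K}. real (grid_count \<delta> (graph_of (blk k) f))) + real (grid_count \<delta> T)"
      unfolding of_nat_sum[symmetric] of_nat_add[symmetric] using n1 by (simp only: of_nat_le_iff)
    have r2: "(\<Sum>k\<in>{3..K}. real (grid_count \<delta> (graph_of (blk k) f))) \<le> (\<Sum>k\<in>{3..K}. (8 * M + 8) * \<delta> powr (- b))"
    proof (rule sum_mono)
      fix k assume "k \<in> {3..K}"
      then show "real (grid_count \<delta> (graph_of (blk k) f)) \<le> (8 * M + 8) * \<delta> powr (- b)"
        using blk_X fb by (intro gblk_count d(1) d1 M0) auto
    qed
    have r3: "(\<Sum>k\<in>{3..K}. (8 * M + 8) * \<delta> powr (- b)) \<le> real K * ((8 * M + 8) * \<delta> powr (- b))"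
    proof -
      have "(\<Sum>k\<in>{3..K}. (8 * M + 8) * \<delta> powr (- b)) = real (card {3..K}) * ((8 * M + 8) * \<delta> powr (- b))" by simp
      also have "\<dots> \<le> real K * ((8 * M + 8) * \<delta> powr (- b))" using M0 by (intro mult_right_mono) auto
      finally show ?thesis .
    qed
    have r4: "real (grid_count \<delta> T) \<le> ((2 * u (Suc K) - 0) / \<delta> + 2) * ((M - - M) / \<delta> + 2)"
      unfolding T_def by (rule count2_box(2)[OF d(1) order.refl]) (use u_pos[of "Suc K"] M0 in auto)
    define t where "t = \<delta> powr (1 - b)"
    have t1: "1 \<le> t" unfolding t_def using pw_ge1'[OF d(1) d1, of "b - 1"] b1 by simp
    have tb: "t / \<delta> = \<delta> powr (- b)" unfolding t_def using d by (simp add: pw_split)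
    have "2 * u (Suc K) / \<delta> \<le> 8 * \<delta> powr (2 - b) / \<delta>" using tail_le[OF K(2) d(1)] d by (intro divide_right_mono) auto
    also have "8 * \<delta> powr (2 - b) / \<delta> = 8 * t"
      unfolding t_def using d pw_split[OF d(1), of "b - 1"] by simp
    finally have A: "(2 * u (Suc K) - 0) / \<delta> + 2 \<le> 10 * t" using t1 by simp
    have Bb: "(M - - M) / \<delta> + 2 \<le> (2 * M + 2) / \<delta>" using d d1 by (simp add: field_simps)
    have "((2 * u (Suc K) - 0) / \<delta> + 2) * ((M - - M) / \<delta> + 2) \<le> (10 * t) * ((2 * M + 2) / \<delta>)"
      by (rule mult_mono[OF A Bb]) (use t1 M0 d in auto)
    also have "(10 * t) * ((2 * M + 2) / \<delta>) = (20 * M + 20) * (t / \<delta>)" by (simp add: algebra_simps add_divide_distrib)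
    finally have r5: "real (grid_count \<delta> T) \<le> (20 * M + 20) * \<delta> powr (- b)" using r4 tb by simp
    have "1 \<le> real K" using K by simp
    then have "1 * ((20 * M + 20) * \<delta> powr (- b)) \<le> real K * ((20 * M + 20) * \<delta> powr (- b))"
      using ge1 M0 by (intro mult_right_mono) auto
    then have r6: "(20 * M + 20) * \<delta> powr (- b) \<le> real K * ((20 * M + 20) * \<delta> powr (- b))" by simp
    have r7: "real K * ((28 * M + 28) * \<delta> powr (- b)) \<le> ln (1/\<delta>) * ((28 * M + 28) * \<delta> powr (- b))"
      using K(3) ge1 M0 by (intro mult_right_mono) auto
    show "real (grid_count \<delta> (graph_of X f)) \<le> (28 * M + 28) * ln (1/\<delta>) * \<delta> powr (- b)"
      using r1 r2 r3 r5 r6 r7 by (simp add: algebra_simps)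
  qed
qed

end

theorem theorem3:
  fixes a b :: real
  assumes "0 < a" "a \<le> 1" "max (2 * a) 1 \<le> b" "b \<le> a + 1"
  shows "\<exists>X. X \<subseteq> {0..1} \<and> compact X \<and>
           upper_box_dim X = ereal a \<and> upper_graph_box_dim X = ereal b"
proof -
  interpret cons a b using assms by unfold_locales auto
  have d1: "upper_box_dim X = ereal a" using X_upper X_lower by (rule antisym)
  have d2: "upper_graph_box_dim X = ereal b"
    unfolding upper_graph_box_dim_def
  proof (rule antisym)
    show "(SUP f\<in>{f. uniformly_continuous_on X f}. upper_box_dim (graph_of X f)) \<le> ereal b"
      by (rule SUP_least) (auto intro: graph_upper)
    show "ereal b \<le> (SUP f\<in>{f. uniformly_continuous_on X f}. upper_box_dim (graph_of X f))"
      by (rule SUP_upper2[where i = f0]) (use f0_uc graph_lower in auto)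
  qed
  show ?thesis using X_01 X_compact d1 d2 by blast
qed


end
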